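(* Let $k\geq 2$ be an integer such that $n=2k+1$ is prime. Then there is a connected $k$-colouring of the edges of $K_n$ in which exactly $\frac{k(k-2)}{3}$ distinct $3$-sets of colours occur as colour sets of multicoloured triangles.
   Context: A $k$-colouring of the edges of the complete graph $K_n$ (colours from $\{1,\dots,k\}$) is called connected if for each colour $i$ the edges of colour $i$ form a connected spanning subgraph of $K_n$. A triangle is multicoloured if its three edges have three distinct colours; its colour set is the set of these three colours. *)

theory Defs
  imports Complex_Main "HOL-Computational_Algebra.Primes"
begin

definition edge_colouring :: "nat \<Rightarrow> nat \<Rightarrow> (nat \<Rightarrow> nat \<Rightarrow> nat) \<Rightarrow> bool" where
  "edge_colouring n k c \<longleftrightarrow>
     (\<forall>u<n. \<forall>v<n. u \<noteq> v \<longrightarrow> c u v = c v u \<and> c u v \<in> {1..k})"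

definition colour_class_connected :: "nat \<Rightarrow> (nat \<Rightarrow> nat \<Rightarrow> nat) \<Rightarrow> nat \<Rightarrow> bool" where
  "colour_class_connected n c i \<longleftrightarrow>
     (\<forall>u<n. \<forall>v<n. (\<lambda>x y. x < n \<and> y < n \<and> x \<noteq> y \<and> c x y = i)\<^sup>*\<^sup>* u v)"

definition connected_colouring :: "nat \<Rightarrow> nat \<Rightarrow> (nat \<Rightarrow> nat \<Rightarrow> nat) \<Rightarrow> bool" where
  "connected_colouring n k c \<longleftrightarrow>
     edge_colouring n k c \<and> (\<forall>i\<in>{1..k}. colour_class_connected n c i)"

definition multicoloured_colour_sets :: "nat \<Rightarrow> (nat \<Rightarrow> nat \<Rightarrow> nat) \<Rightarrow> nat set set" where
  "multicoloured_colour_sets n c =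
     {{c a b, c b d, c a d} | a b d. a < n \<and> b < n \<and> d < n \<and> a \<noteq> b \<and> b \<noteq> d \<and> a \<noteq> d
        \<and> card {c a b, c b d, c a d} = 3}"

end

theory Submission imports Defs "HOL-Combinatorics.Multiset_Permutations" "HOL-Number_Theory.Cong"
begin

definition cls :: "nat \<Rightarrow> int \<Rightarrow> nat" where
  "cls k t = (let r = t mod (2 * int k + 1) in if r \<le> int k then nat r else nat (2 * int k + 1 - r))"

definition col :: "nat \<Rightarrow> nat \<Rightarrow> nat \<Rightarrow> nat" where
  "col k u v = cls k (int u - int v)"

lemma cls_mod: "cls k (t mod (2 * int k + 1)) = cls k t"
  by (simp add: cls_def)

lemma cls_neg: "cls k (- t) = cls k t"
proof -
  define n where "n = 2 * int k + 1"
  have np: "n > 0" unfolding n_def by simp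
  show ?thesis
  proof (cases "t mod n = 0")
    case True
    then have "(-t) mod n = 0" by (simp add: zmod_zminus1_eq_if)
    then show ?thesis using True unfolding cls_def n_def[symmetric] by simp
  next
    case False
    then have "(-t) mod n = n - t mod n" by (simp add: zmod_zminus1_eq_if)
    moreover have "0 \<le> t mod n" "t mod n < n" using np by auto
    ultimately show ?thesis unfolding cls_def n_def[symmetric] Let_def
      using False by (auto simp: n_def)
  qed
qed

lemma cls_small: "1 \<le> x \<Longrightarrow> x \<le> int k \<Longrightarrow> cls k x = nat x"
  by (simp add: cls_def)

lemma cls_range: "t mod (2 * int k + 1) \<noteq> 0 \<Longrightarrow> cls k t \<in> {1..k}"
proof -
  assume a: "t mod (2 * int k + 1) \<noteq> 0"
  have "0 \<le> t mod (2 * int k + 1)" "t mod (2 * int k + 1) < 2 * int k + 1"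
    by (simp, rule pos_mod_bound, simp)
  then have "1 \<le> t mod (2 * int k + 1)" "t mod (2 * int k + 1) \<le> 2 * int k" using a by linarith+
  then show ?thesis unfolding cls_def Let_def by (auto simp: le_nat_iff)
qed

lemma cls_eq:
  assumes "cls k s = cls k t"
  shows "(s - t) mod (2 * int k + 1) = 0 \<or> (s + t) mod (2 * int k + 1) = 0"
proof -
  define n where "n = 2 * int k + 1"
  define r where "r = s mod n"
  define q where "q = t mod n"
  have np: "n > 0" using n_def by simp
  have b: "0 \<le> r" "r < n" "0 \<le> q" "q < n" using np unfolding r_def q_def by auto
  have e: "(if r \<le> int k then nat r else nat (n - r)) = (if q \<le> int k then nat q else nat (n - q))"
    using assms unfolding cls_def Let_def n_def[symmetric] r_def q_def .
  have "r = q \<or> r + q = n \<or> (r = 0 \<and> q = 0)" using e b n_def by (auto split: if_splits)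
  moreover have "(s - t) mod n = (r - q) mod n" unfolding r_def q_def by (simp add: mod_diff_eq)
  moreover have "(s + t) mod n = (r + q) mod n" unfolding r_def q_def by (simp add: mod_add_eq)
  ultimately show ?thesis unfolding n_def[symmetric] by auto
qed

lemma cls_add_mod: "cls k (a + b mod (2 * int k + 1)) = cls k (a + b)"
  by (metis cls_mod mod_add_right_eq)

lemma cls_eq_iff:
  "cls k s = cls k t \<longleftrightarrow> (2 * int k + 1) dvd (s - t) \<or> (2 * int k + 1) dvd (s + t)"
proof
  assume "cls k s = cls k t"
  then show "(2 * int k + 1) dvd (s - t) \<or> (2 * int k + 1) dvd (s + t)"
    using cls_eq by (simp add: dvd_eq_mod_eq_0)
next
  assume "(2 * int k + 1) dvd (s - t) \<or> (2 * int k + 1) dvd (s + t)"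
  then show "cls k s = cls k t"
  proof
    assume "(2 * int k + 1) dvd (s - t)"
    then have "s mod (2 * int k + 1) = t mod (2 * int k + 1)" by (simp add: mod_eq_dvd_iff)
    then show ?thesis by (metis cls_mod)
  next
    assume "(2 * int k + 1) dvd (s + t)"
    then have "s mod (2 * int k + 1) = (-t) mod (2 * int k + 1)" by (simp add: mod_eq_dvd_iff)
    then show ?thesis by (metis cls_mod cls_neg)
  qed
qed

lemma cls_zero: "cls k 0 = 0" by (simp add: cls_def)

lemma col_sym: "col k u v = col k v u"
  unfolding col_def by (metis cls_neg minus_diff_eq)

lemma dvd_small_int: "(n::int) dvd t \<Longrightarrow> \<bar>t\<bar> < n \<Longrightarrow> t = 0"
  using dvd_imp_le_int by force

definition A1 :: "nat \<Rightarrow> (int \<times> int) set" where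
  "A1 k = {(x, y). 1 \<le> x \<and> x \<le> int k \<and> 1 \<le> y \<and> y \<le> 2 * int k \<and>
      \<not> (2 * int k + 1) dvd (x + y) \<and> distinct [cls k x, cls k y, cls k (x + y)]}"

definition hh :: "nat \<Rightarrow> int \<times> int \<Rightarrow> nat list" where
  "hh k p = [cls k (fst p), cls k (snd p), cls k (fst p + snd p)]"

definition yx :: "nat \<Rightarrow> int \<Rightarrow> int" where
  "yx k x = (if even x then 2 * int k + 1 - x div 2 else (2 * int k + 1 - x) div 2)"

lemma yx_cases: "(\<exists>m. x = 2*m \<and> yx k x = 2*int k + 1 - m) \<or> (\<exists>m. x = 2*m+1 \<and> yx k x = int k - m)"
proof (cases "even x")
  case True
  then obtain m where m: "x = 2 * m" by blast
  then show ?thesis unfolding yx_def by simp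
next
  case False
  then obtain m where m: "x = 2 * m + 1" by (metis oddE)
  have "2 * int k + 1 - (2 * m + 1) = 2 * (int k - m)" by simp
  then have "(2 * int k + 1 - x) div 2 = int k - m" unfolding m by simp
  then show ?thesis using False m unfolding yx_def by auto
qed

lemma yx_ex: "\<exists>m. (x = 2*m \<and> yx k x = 2*int k + 1 - m) \<or> (x = 2*m+1 \<and> yx k x = int k - m)"
  using yx_cases[of x k] by blast

lemma par: "2 * (a::int) \<noteq> 2 * b + 1" by presburger

lemma d3b_aux: "(x = 2*m \<and> v = 2*K + 1 - m) \<or> (x = 2*m+1 \<and> v = K - m) \<Longrightarrow> 1 \<le> x \<Longrightarrow> x \<le> (K::int) \<Longrightarrow> 1 \<le> y \<Longrightarrow>
  (x + 2 * y = 2 * K + 1 \<or> x + 2 * y = 2 * (2 * K + 1)) \<longleftrightarrow> y = v"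
proof (elim disjE conjE)
  assume "x = 2 * m" "v = 2 * K + 1 - m"
  moreover have "2 * m + 2 * y \<noteq> 2 * K + 1" using par[of "m + y" K] by (simp add: algebra_simps)
  ultimately show ?thesis by auto
next
  assume "x = 2 * m + 1" "v = K - m"
  moreover have "2 * m + 1 + 2 * y \<noteq> 2 * (2 * K + 1)" using par[of "2 * K + 1" "m + y"] by (simp add: algebra_simps)
  ultimately show ?thesis by auto
qed

lemma d3b: "1 \<le> x \<Longrightarrow> x \<le> int k \<Longrightarrow> 1 \<le> y \<Longrightarrow>
  (x + 2 * y = 2 * int k + 1 \<or> x + 2 * y = 2 * (2 * int k + 1)) \<longleftrightarrow> y = yx k x"
  using yx_ex[of x k] d3b_aux by blast

lemma yx_aux:
  assumes "(x = 2*m \<and> v = 2*K + 1 - m) \<or> (x = 2*m+1 \<and> v = K - m)"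
   "1 \<le> x" "x \<le> (K::int)" "3 * x \<noteq> 2 * K + 1" "3 * x \<noteq> 2 * (2 * K + 1)"
  shows "1 \<le> v \<and> v \<le> 2 * K \<and> 2 * K + 1 - x \<noteq> v \<and> x \<noteq> v \<and> 2 * K + 1 - 2 * x \<noteq> v"
  using assms(1)
proof (elim disjE conjE)
  assume a: "x = 2 * m" "v = 2 * K + 1 - m"
  then have "m \<ge> 1" using assms(2) by linarith
  then show ?thesis using a assms(2-5) by linarith
next
  assume a: "x = 2 * m + 1" "v = K - m"
  then show ?thesis using assms(2-5) by linarith
qed

lemma yx_facts:
  assumes "1 \<le> x" "x \<le> int k" "3 * x \<noteq> 2 * int k + 1" "3 * x \<noteq> 2 * (2 * int k + 1)"
  shows "1 \<le> yx k x" "yx k x \<le> 2 * int k" "2 * int k + 1 - x \<noteq> yx k x" "x \<noteq> yx k x"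
    "2 * int k + 1 - 2 * x \<noteq> yx k x"
  using yx_ex[of x k] yx_aux[OF _ assms] by meson+

context
  fixes k :: nat
  assumes k2: "k \<ge> 2" and pr: "prime (2 * k + 1)"
begin

lemma prI: "prime (2 * int k + 1)"
  using pr by (metis of_nat_1 of_nat_add of_nat_mult of_nat_numeral prime_nat_int_transfer)

lemma ndvd2: "(2 * int k + 1) dvd (2 * t) \<Longrightarrow> (2 * int k + 1) dvd t"
proof -
  assume a: "(2 * int k + 1) dvd (2 * t)"
  have "\<not> (2 * int k + 1) dvd 2"
  proof
    assume "(2 * int k + 1) dvd 2"
    then have "2 * int k + 1 \<le> 2" by (rule zdvd_imp_le) simp
    with k2 show False by simp
  qed
  with a prI show ?thesis using prime_dvd_mult_iff by blast
qed

lemma ndvd3: "(2 * int k + 1) dvd (3 * t) \<Longrightarrow> (2 * int k + 1) dvd t"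
proof -
  assume a: "(2 * int k + 1) dvd (3 * t)"
  have "\<not> (2 * int k + 1) dvd 3"
  proof
    assume "(2 * int k + 1) dvd 3"
    then have "2 * int k + 1 \<le> 3" by (rule zdvd_imp_le) simp
    with k2 show False by simp
  qed
  with a prI show ?thesis using prime_dvd_mult_iff by blast
qed

lemma diff_ndvd: "u < 2 * k + 1 \<Longrightarrow> v < 2 * k + 1 \<Longrightarrow> u \<noteq> v \<Longrightarrow> \<not> (2 * int k + 1) dvd (int u - int v)"
proof
  assume "u < 2 * k + 1" "v < 2 * k + 1" "u \<noteq> v" "(2 * int k + 1) dvd (int u - int v)"
  moreover have "\<bar>int u - int v\<bar> < 2 * int k + 1" using calculation by auto
  ultimately show False using dvd_small_int by force
qed

lemma edge: "edge_colouring (2 * k + 1) k (col k)"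
  unfolding edge_colouring_def
proof (intro allI impI conjI)
  fix u v assume "u < 2 * k + 1" "v < 2 * k + 1" "u \<noteq> v"
  then have "\<not> (2 * int k + 1) dvd (int u - int v)" by (rule diff_ndvd)
  then show "col k u v \<in> {1..k}" unfolding col_def using cls_range by (simp add: dvd_eq_mod_eq_0)
  show "col k u v = col k v u" by (rule col_sym)
qed

lemma col_step:
  assumes "i \<in> {1..k}" "u < 2 * k + 1"
  shows "col k u ((u + i) mod (2 * k + 1)) = i"
proof -
  have "int ((u + i) mod (2 * k + 1)) = (int u + int i) mod (2 * int k + 1)"
    by (simp add: of_nat_mod add.commute)
  then have "col k u ((u + i) mod (2 * k + 1)) = cls k (int u - (int u + int i) mod (2 * int k + 1))"
    unfolding col_def by simp
  also have "\<dots> = cls k (int u - (int u + int i))"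
    by (metis cls_mod mod_diff_right_eq)
  also have "\<dots> = cls k (int i)" by (simp add: cls_neg[of k "int i", symmetric])
  also have "\<dots> = i" using assms by (simp add: cls_small)
  finally show ?thesis .
qed

lemma conn: "i \<in> {1..k} \<Longrightarrow> colour_class_connected (2 * k + 1) (col k) i"
  unfolding colour_class_connected_def
proof (intro allI impI)
  fix u v assume i: "i \<in> {1..k}" and u: "u < 2 * k + 1" and v: "v < 2 * k + 1"
  define R where "R = (\<lambda>x y. x < 2 * k + 1 \<and> y < 2 * k + 1 \<and> x \<noteq> y \<and> col k x y = i)"
  have st: "R w ((w + i) mod (2 * k + 1))" if "w < 2 * k + 1" for w
  proof -
    have c: "col k w ((w + i) mod (2 * k + 1)) = i" using col_step[OF i that] .
    have "w \<noteq> (w + i) mod (2 * k + 1)"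
    proof
      assume "w = (w + i) mod (2 * k + 1)"
      then have "col k w w = i" using c by simp
      then show False using i by (simp add: col_def cls_zero)
    qed
    then show ?thesis unfolding R_def using that c by simp
  qed
  have it: "R\<^sup>*\<^sup>* u ((u + j * i) mod (2 * k + 1))" for j
  proof (induction j)
    case 0
    then show ?case using u by simp
  next
    case (Suc j)
    have "R ((u + j * i) mod (2 * k + 1)) (((u + j * i) mod (2 * k + 1) + i) mod (2 * k + 1))"
      by (rule st) simp
    moreover have "((u + j * i) mod (2 * k + 1) + i) mod (2 * k + 1) = (u + Suc j * i) mod (2 * k + 1)"
      by (metis mod_add_left_eq add.assoc mult_Suc add.commute)
    ultimately show ?case using Suc by (metis rtranclp.rtrancl_into_rtrancl)
  qed
  have "\<not> (2 * k + 1) dvd i" using i by (auto dest: dvd_imp_le)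
  then have "coprime (2 * k + 1) i" using pr by (rule prime_imp_coprime[rotated])
  then have "coprime i (2 * k + 1)" by (simp add: coprime_commute)
  then obtain x where x: "[i * x = Suc 0] (mod (2 * k + 1))" using cong_solve_coprime_nat by blast
  define j where "j = x * (v + (2 * k + 1) - u)"
  have "[i * x * (v + (2 * k + 1) - u) = Suc 0 * (v + (2 * k + 1) - u)] (mod (2 * k + 1))"
    using x by (rule cong_mult) simp
  then have "[u + j * i = u + (v + (2 * k + 1) - u)] (mod (2 * k + 1))"
    unfolding j_def by (intro cong_add) (simp_all add: ac_simps)
  moreover have "u + (v + (2 * k + 1) - u) = v + 1 * (2 * k + 1)" using u by simp
  ultimately have "[u + j * i = v] (mod (2 * k + 1))"
    by (metis cong_def mod_mult_self1 mult.commute)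
  then have "(u + j * i) mod (2 * k + 1) = v" using v by (simp add: cong_def)
  with it[of j] show "(\<lambda>x y. x < 2 * k + 1 \<and> y < 2 * k + 1 \<and> x \<noteq> y \<and> col k x y = i)\<^sup>*\<^sup>* u v"
    unfolding R_def by simp
qed

lemma connected: "connected_colouring (2 * k + 1) k (col k)"
  unfolding connected_colouring_def using edge conn by blast

lemma cls_nz: "\<not> (2 * int k + 1) dvd t \<Longrightarrow> cls k t \<noteq> 0"
  using cls_range[of t k] by (auto simp: dvd_eq_mod_eq_0)

lemma col_refl: "col k u u = 0" by (simp add: col_def cls_zero)

lemma M0:
  assumes "\<not> (2 * int k + 1) dvd s" "\<not> (2 * int k + 1) dvd t" "\<not> (2 * int k + 1) dvd (s + t)"
    "distinct [cls k s, cls k t, cls k (s + t)]" "s mod (2 * int k + 1) \<le> int k"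
  shows "[cls k s, cls k t, cls k (s + t)] \<in> hh k ` A1 k"
proof -
  define N where "N = 2 * int k + 1"
  have Np: "N > 0" unfolding N_def by simp
  have s1: "1 \<le> s mod N" using assms(1) Np unfolding N_def[symmetric]
    by (metis dvd_eq_mod_eq_0 order_le_less pos_mod_sign zless_imp_add1_zle add_0)
  have t1: "1 \<le> t mod N" using assms(2) Np unfolding N_def[symmetric]
    by (metis dvd_eq_mod_eq_0 order_le_less pos_mod_sign zless_imp_add1_zle add_0)
  have t2: "t mod N \<le> 2 * int k" using pos_mod_bound[OF Np, of t] unfolding N_def by linarith
  have e: "(s mod N + t mod N) mod N = (s + t) mod N" by (simp add: mod_add_eq)
  have c3: "cls k (s mod N + t mod N) = cls k (s + t)" unfolding N_def
    by (metis cls_mod e N_def)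
  have c1: "cls k (s mod N) = cls k s" "cls k (t mod N) = cls k t" unfolding N_def by (simp_all add: cls_mod)
  have nd: "\<not> N dvd (s mod N + t mod N)" using assms(3) e unfolding N_def[symmetric]
    by (simp add: dvd_eq_mod_eq_0)
  have "(s mod N, t mod N) \<in> A1 k" unfolding A1_def
    using s1 t1 t2 assms(5) nd assms(4) c1 c3 unfolding N_def[symmetric] by simp
  moreover have "hh k (s mod N, t mod N) = [cls k s, cls k t, cls k (s + t)]"
    unfolding hh_def using c1 c3 by simp
  ultimately show ?thesis by force
qed

lemma M:
  assumes "\<not> (2 * int k + 1) dvd s" "\<not> (2 * int k + 1) dvd t" "\<not> (2 * int k + 1) dvd (s + t)"
    "distinct [cls k s, cls k t, cls k (s + t)]"
  shows "[cls k s, cls k t, cls k (s + t)] \<in> hh k ` A1 k"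
proof (cases "s mod (2 * int k + 1) \<le> int k")
  case True
  then show ?thesis using M0 assms by blast
next
  case False
  have "(-s) mod (2 * int k + 1) = 2 * int k + 1 - s mod (2 * int k + 1)"
    using assms(1) by (simp add: zmod_zminus1_eq_if dvd_eq_mod_eq_0)
  with False have le: "(-s) mod (2 * int k + 1) \<le> int k" by simp
  have eq: "cls k (-s) = cls k s" "cls k (-t) = cls k t" "cls k (-s + -t) = cls k (s + t)"
    using cls_neg by (metis, metis, metis minus_add_distrib)
  have nd: "\<not> (2 * int k + 1) dvd (-s + -t)" using assms(3) by (metis dvd_minus_iff minus_add_distrib)
  have "[cls k (-s), cls k (-t), cls k (-s + -t)] \<in> hh k ` A1 k"
    apply (rule M0)
    using assms le eq nd by (simp_all add: dvd_minus_iff flip: minus_add_distrib)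
  then show ?thesis using eq by simp
qed

lemma L:
  assumes "a < 2 * k + 1" "b < 2 * k + 1" "d < 2 * k + 1" "a \<noteq> b" "b \<noteq> d" "a \<noteq> d"
    "card {col k a b, col k b d, col k a d} = 3"
  shows "[col k a b, col k b d, col k a d] \<in> hh k ` A1 k"
proof -
  define s where "s = int a - int b"
  define t where "t = int b - int d"
  have st: "s + t = int a - int d" unfolding s_def t_def by simp
  have "distinct [col k a b, col k b d, col k a d]" using assms(7)
    by (metis card_distinct distinct_length_2_or_more length_Cons list.set(1) list.set(2) list.size(3) numeral_3_eq_3)
  then have "distinct [cls k s, cls k t, cls k (s + t)]" by (simp add: s_def t_def col_def)
  moreover have "\<not> (2 * int k + 1) dvd s" "\<not> (2 * int k + 1) dvd t" "\<not> (2 * int k + 1) dvd (s + t)"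
    unfolding st s_def t_def using diff_ndvd assms by auto
  ultimately have "[cls k s, cls k t, cls k (s + t)] \<in> hh k ` A1 k" using M by blast
  then show ?thesis by (simp add: s_def t_def col_def)
qed

lemma perm6:
  assumes "distinct xs" "set xs = {e1, e2, e3}" "distinct [e1, e2, e3]"
  shows "xs = [e1,e2,e3] \<or> xs = [e1,e3,e2] \<or> xs = [e2,e1,e3] \<or> xs = [e2,e3,e1] \<or> xs = [e3,e1,e2] \<or> xs = [e3,e2,e1]"
proof -
  have "length xs = 3" using distinct_card[OF assms(1)] assms(2,3) by simp
  then obtain p q r where xs: "xs = [p, q, r]"
    by (auto simp: numeral_3_eq_3 length_Suc_conv)
  have d: "p \<noteq> q" "p \<noteq> r" "q \<noteq> r" using assms(1) xs by auto
  have "p \<in> {e1, e2, e3}" "q \<in> {e1, e2, e3}" "r \<in> {e1, e2, e3}" using assms(2) xs by auto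
  then show ?thesis unfolding xs using d assms(3)
    by (elim insertE emptyE) simp_all
qed

lemma L2:
  assumes "a < 2 * k + 1" "b < 2 * k + 1" "d < 2 * k + 1" "a \<noteq> b" "b \<noteq> d" "a \<noteq> d"
    "distinct [col k a b, col k b d, col k a d]"
  shows "[col k a b, col k b d, col k a d] \<in> hh k ` A1 k"
  by (rule L) (use assms in simp_all)

lemma T_sub:
  assumes "distinct xs" "set xs \<in> multicoloured_colour_sets (2 * k + 1) (col k)"
  shows "xs \<in> hh k ` A1 k"
proof -
  obtain a b d where abd: "set xs = {col k a b, col k b d, col k a d}" "a < 2 * k + 1" "b < 2 * k + 1"
    "d < 2 * k + 1" "a \<noteq> b" "b \<noteq> d" "a \<noteq> d" and c3: "card {col k a b, col k b d, col k a d} = 3"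
    using assms(2) unfolding multicoloured_colour_sets_def by blast
  have dis: "distinct [col k a b, col k b d, col k a d]" using c3
    by (metis card_distinct distinct_length_2_or_more length_Cons list.set(1) list.set(2) list.size(3) numeral_3_eq_3)
  have ba: "col k b a = col k a b" and db: "col k d b = col k b d" and da: "col k d a = col k a d"
    by (simp_all add: col_sym[of k])
  have "[col k a b, col k b d, col k a d] \<in> hh k ` A1 k" using L2 abd dis by blast
  moreover have "[col k b a, col k a d, col k b d] \<in> hh k ` A1 k"
    apply (rule L2) using abd dis ba db da by auto
  moreover have "[col k a d, col k d b, col k a b] \<in> hh k ` A1 k"
    apply (rule L2) using abd dis ba db da by auto
  moreover have "[col k d b, col k b a, col k d a] \<in> hh k ` A1 k"
    apply (rule L2) using abd dis ba db da by auto
  moreover have "[col k b d, col k d a, col k b a] \<in> hh k ` A1 k"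
    apply (rule L2) using abd dis ba db da by auto
  moreover have "[col k d a, col k a b, col k d b] \<in> hh k ` A1 k"
    apply (rule L2) using abd dis ba db da by auto
  ultimately show ?thesis using perm6[OF assms(1) abd(1) dis] unfolding ba db da by fast
qed

lemma A1_T:
  assumes "p \<in> A1 k"
  shows "distinct (hh k p) \<and> set (hh k p) \<in> multicoloured_colour_sets (2 * k + 1) (col k)"
proof -
  obtain x y where p: "p = (x, y)" by force
  define N where "N = 2 * int k + 1"
  have Np: "N > 0" unfolding N_def by simp
  have x: "1 \<le> x" "x \<le> int k" and y: "1 \<le> y" "y \<le> 2 * int k" and nd: "\<not> N dvd (x + y)"
    and dis: "distinct [cls k x, cls k y, cls k (x + y)]"
    using assms unfolding p A1_def N_def by auto
  define a where "a = nat ((x + y) mod N)"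
  define b where "b = nat y"
  have ia: "int a = (x + y) mod N" unfolding a_def using Np by simp
  have ib: "int b = y" unfolding b_def using y by simp
  have a: "a < 2 * k + 1" using ia pos_mod_bound[OF Np, of "x+y"] unfolding N_def by linarith
  have b: "b < 2 * k + 1" using ib y by linarith
  have cab: "col k a b = cls k x" unfolding col_def ia ib N_def
    by (metis add_diff_cancel_right' cls_mod mod_diff_left_eq)
  have cbd: "col k b 0 = cls k y" unfolding col_def ib by simp
  have cad: "col k a 0 = cls k (x + y)" unfolding col_def ia N_def by (simp add: cls_mod)
  have ny: "\<not> N dvd y"
  proof
    assume "N dvd y"
    then have "N \<le> y" using y by (intro zdvd_imp_le) auto
    then show False using y unfolding N_def by simp
  qed
  have nz: "cls k x \<noteq> 0" "cls k y \<noteq> 0" "cls k (x + y) \<noteq> 0"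
    using x cls_nz ny nd unfolding N_def by (auto simp: cls_small)
  have f1: "a \<noteq> b" using cab nz col_refl by metis
  have f2: "b \<noteq> 0" using cbd nz col_refl by metis
  have f3: "a \<noteq> 0" using cad nz col_refl by metis
  have f4: "card {col k a b, col k b 0, col k a 0} = 3" using dis cab cbd cad by simp
  have "{col k a b, col k b 0, col k a 0} \<in> multicoloured_colour_sets (2 * k + 1) (col k)"
  proof -
    have "\<exists>a' b' d'. {col k a b, col k b 0, col k a 0} = {col k a' b', col k b' d', col k a' d'} \<and>
      a' < 2 * k + 1 \<and> b' < 2 * k + 1 \<and> d' < 2 * k + 1 \<and> a' \<noteq> b' \<and> b' \<noteq> d' \<and> a' \<noteq> d' \<and>
      card {col k a' b', col k b' d', col k a' d'} = 3"
      apply (rule exI[of _ a], rule exI[of _ b], rule exI[of _ 0])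
      using a b f1 f2 f3 f4 by simp
    then show ?thesis unfolding multicoloured_colour_sets_def by blast
  qed
  then show ?thesis using dis cab cbd cad unfolding p hh_def by simp
qed

lemma hh_inj: "inj_on (hh k) (A1 k)"
proof (rule inj_onI)
  fix p p' assume p: "p \<in> A1 k" and p': "p' \<in> A1 k" and e: "hh k p = hh k p'"
  obtain x y where px: "p = (x, y)" by force
  obtain x' y' where px': "p' = (x', y')" by force
  define N where "N = 2 * int k + 1"
  have x: "1 \<le> x" "x \<le> int k" and y: "1 \<le> y" "y \<le> 2 * int k"
    using p unfolding px A1_def by auto
  have x': "1 \<le> x'" "x' \<le> int k" and y': "1 \<le> y'" "y' \<le> 2 * int k"
    using p' unfolding px' A1_def by auto
  have e1: "cls k x = cls k x'" and e2: "cls k y = cls k y'" and e3: "cls k (x + y) = cls k (x' + y')"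
    using e unfolding px px' hh_def by auto
  have xx: "x = x'" using e1 x x' by (simp add: cls_small)
  have ny: "\<not> N dvd y"
  proof
    assume "N dvd y"
    then have "N \<le> y" using y by (intro zdvd_imp_le) auto
    then show False using y unfolding N_def by simp
  qed
  have nx: "\<not> N dvd x"
  proof
    assume "N dvd x"
    then have "N \<le> x" using x by (intro zdvd_imp_le) auto
    then show False using x unfolding N_def by simp
  qed
  have "y = y'"
  proof -
    have "N dvd (y - y') \<or> N dvd (y + y')" using e2 cls_eq_iff unfolding N_def by blast
    moreover have "\<not> N dvd (y + y')"
    proof
      assume a: "N dvd (y + y')"
      have "N dvd ((x + y) - (x' + y')) \<or> N dvd ((x + y) + (x' + y'))"
        using e3 cls_eq_iff unfolding N_def by blast
      then show False
      proof
        assume "N dvd ((x + y) - (x' + y'))"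
        then have "N dvd (y - y')" using xx by simp
        with a have "N dvd ((y + y') + (y - y'))" by (rule dvd_add)
        then have "N dvd (2 * y)" by (simp add: algebra_simps)
        then show False using ndvd2 ny unfolding N_def by blast
      next
        assume "N dvd ((x + y) + (x' + y'))"
        with a have "N dvd ((x + y) + (x' + y') - (y + y'))" by (intro dvd_diff)
        then have "N dvd (2 * x)" using xx by (simp add: algebra_simps)
        then show False using ndvd2 nx unfolding N_def by blast
      qed
    qed
    ultimately have "N dvd (y - y')" by blast
    moreover have "\<bar>y - y'\<bar> < N" using y y' unfolding N_def by simp
    ultimately show ?thesis using dvd_small_int by force
  qed
  then show "p = p'" using xx px px' by simp
qed

lemma dvd_range2: "(n::int) > 0 \<Longrightarrow> 0 < m \<Longrightarrow> m < 2 * n \<Longrightarrow> n dvd m \<longleftrightarrow> m = n"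
proof
  assume "n > 0" "0 < m" "m < 2 * n" "n dvd m"
  then obtain q where q: "m = n * q" by blast
  have "0 < q" using \<open>n > 0\<close> \<open>0 < m\<close> q by (simp add: zero_less_mult_iff)
  moreover have "q < 2" using \<open>n > 0\<close> \<open>m < 2 * n\<close> q by (simp add: mult.commute)
  ultimately show "m = n" using q by simp
qed simp

lemma dvd_range3: "(n::int) > 0 \<Longrightarrow> 0 < m \<Longrightarrow> m < 3 * n \<Longrightarrow> n dvd m \<longleftrightarrow> m = n \<or> m = 2 * n"
proof
  assume "n > 0" "0 < m" "m < 3 * n" "n dvd m"
  then obtain q where q: "m = n * q" by blast
  have "0 < q" using \<open>n > 0\<close> \<open>0 < m\<close> q by (simp add: zero_less_mult_iff)
  moreover have "q < 3" using \<open>n > 0\<close> \<open>m < 3 * n\<close> q by (simp add: mult.commute)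
  ultimately show "m = n \<or> m = 2 * n" using q by (cases "q = 1") auto
qed auto


definition FF :: "int \<Rightarrow> int set" where
  "FF x = {2 * int k + 1 - x, x, 2 * int k + 1 - 2 * x, yx k x}"

lemma A1_Sigma: "A1 k = Sigma {1..int k} (\<lambda>x. {1..2 * int k} - FF x)"
proof -
  define N where "N = 2 * int k + 1"
  have Np: "N > 0" unfolding N_def by simp
  have key: "(\<not> N dvd (x + y) \<and> distinct [cls k x, cls k y, cls k (x + y)]) \<longleftrightarrow> y \<notin> FF x"
    if x: "1 \<le> x" "x \<le> int k" and y: "1 \<le> y" "y \<le> 2 * int k" for x y
  proof -
    have nx: "\<not> N dvd x" "\<not> N dvd (-x)"
      using dvd_range2[OF Np, of x] x unfolding N_def by auto
    have ny: "\<not> N dvd (-y)"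
      using dvd_range2[OF Np, of y] y unfolding N_def by auto
    have d1: "N dvd (x + y) \<longleftrightarrow> y = N - x"
      using dvd_range2[OF Np, of "x + y"] x y unfolding N_def by auto
    have d2: "N dvd (x - y) \<longleftrightarrow> y = x"
    proof
      assume "N dvd (x - y)"
      moreover have "\<bar>x - y\<bar> < N" using x y unfolding N_def by simp
      ultimately show "y = x" using dvd_small_int by force
    qed simp
    have d3a: "N dvd (x + 2 * y) \<longleftrightarrow> x + 2 * y = N \<or> x + 2 * y = 2 * N"
      using dvd_range3[OF Np, of "x + 2 * y"] x y unfolding N_def by simp
    have d3b: "x + 2 * y = N \<or> x + 2 * y = 2 * N \<longleftrightarrow> y = yx k x"
      using x y d3b[of x k y] unfolding N_def by simp
    have d3: "N dvd (x + 2 * y) \<longleftrightarrow> y = yx k x" using d3a d3b by simp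
    have d4: "N dvd (2 * x + y) \<longleftrightarrow> y = N - 2 * x"
      using dvd_range2[OF Np, of "2 * x + y"] x y unfolding N_def by auto
    have c12: "cls k x = cls k y \<longleftrightarrow> y = x \<or> y = N - x"
      using cls_eq_iff[of k x y] d1 d2 unfolding N_def by auto
    have c13: "cls k x = cls k (x + y) \<longleftrightarrow> y = N - 2 * x"
    proof -
      have "cls k x = cls k (x + y) \<longleftrightarrow> N dvd (-y) \<or> N dvd (2 * x + y)"
        using cls_eq_iff[of k x "x + y"] unfolding N_def by (simp add: algebra_simps)
      then show ?thesis using ny d4 by blast
    qed
    have c23: "cls k y = cls k (x + y) \<longleftrightarrow> y = yx k x"
    proof -
      have "cls k y = cls k (x + y) \<longleftrightarrow> N dvd (-x) \<or> N dvd (x + 2 * y)"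
        using cls_eq_iff[of k y "x + y"] unfolding N_def by (simp add: algebra_simps)
      then show ?thesis using nx d3 by blast
    qed
    show ?thesis unfolding FF_def N_def[symmetric] using d1 c12 c13 c23 by auto
  qed
  show ?thesis
  proof (intro set_eqI)
    fix p :: "int \<times> int"
    obtain x y where p: "p = (x, y)" by force
    show "p \<in> A1 k \<longleftrightarrow> p \<in> Sigma {1..int k} (\<lambda>x. {1..2 * int k} - FF x)"
    proof (cases "1 \<le> x \<and> x \<le> int k \<and> 1 \<le> y \<and> y \<le> 2 * int k")
      case True
      then have kk: "(\<not> N dvd (x + y) \<and> distinct [cls k x, cls k y, cls k (x + y)]) \<longleftrightarrow> y \<notin> FF x"
        using key by blast
      show ?thesis unfolding p A1_def N_def[symmetric] using True kk by auto
    next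
      case False
      then show ?thesis unfolding p A1_def by auto
    qed
  qed
qed

lemma FF_card: "x \<in> {1..int k} \<Longrightarrow> card ({1..2 * int k} - FF x) = 2 * k - 4"
proof -
  assume x: "x \<in> {1..int k}"
  then have xb: "1 \<le> x" "x \<le> int k" by auto
  define N where "N = 2 * int k + 1"
  have n3: "3 * x \<noteq> N \<and> 3 * x \<noteq> 2 * N"
  proof -
    have "\<not> N dvd (3 * x)"
    proof
      assume "N dvd (3 * x)"
      then have "N dvd x" using ndvd3 unfolding N_def by blast
      then have "N \<le> x" using x by (intro zdvd_imp_le) auto
      then show False using x unfolding N_def by simp
    qed
    then show ?thesis by auto
  qed
  have yf: "1 \<le> yx k x" "yx k x \<le> 2 * int k" "N - x \<noteq> yx k x" "x \<noteq> yx k x" "N - 2 * x \<noteq> yx k x"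
    using yx_facts[of x k] xb n3 unfolding N_def by auto
  have sub: "FF x \<subseteq> {1..2 * int k}" using xb yf unfolding FF_def N_def by auto
  have c4: "card (FF x) = 4"
  proof -
    have "N - x \<noteq> x" "N - x \<noteq> N - 2 * x" "N - x \<noteq> yx k x" "x \<noteq> N - 2 * x" "x \<noteq> yx k x"
      "N - 2 * x \<noteq> yx k x"
      using xb n3 yf unfolding N_def by auto
    then show ?thesis unfolding FF_def N_def[symmetric] by simp
  qed
  have "card ({1..2 * int k} - FF x) = card {1..2 * int k} - card (FF x)"
    using sub by (simp add: card_Diff_subset finite_subset)
  then show ?thesis using c4 by simp
qed

lemma card_A1: "card (A1 k) = k * (2 * k - 4)"
proof -
  have "card (A1 k) = (\<Sum>x\<in>{1..int k}. card ({1..2 * int k} - FF x))"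
    unfolding A1_Sigma by (rule card_SigmaI) auto
  also have "\<dots> = (\<Sum>x\<in>{1..int k}. 2 * k - 4)" using FF_card by simp
  also have "\<dots> = k * (2 * k - 4)" by simp
  finally show ?thesis .
qed

lemma cls_le: "cls k t \<le> k"
  unfolding cls_def Let_def by auto

lemma finite_S: "finite (multicoloured_colour_sets (2 * k + 1) (col k))"
proof (rule finite_subset)
  show "multicoloured_colour_sets (2 * k + 1) (col k) \<subseteq> Pow {..k}"
  proof
    fix s assume "s \<in> multicoloured_colour_sets (2 * k + 1) (col k)"
    then obtain a b d where "s = {col k a b, col k b d, col k a d}"
      unfolding multicoloured_colour_sets_def by blast
    then show "s \<in> Pow {..k}" using cls_le unfolding col_def by auto
  qed
qed simp

lemma card_S: "6 * card (multicoloured_colour_sets (2 * k + 1) (col k)) = k * (2 * k - 4)"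
proof -
  define S where "S = multicoloured_colour_sets (2 * k + 1) (col k)"
  define T where "T = {xs. distinct xs \<and> set xs \<in> S}"
  have "hh k ` A1 k = T"
  proof (intro equalityI subsetI)
    fix xs assume "xs \<in> hh k ` A1 k"
    then obtain p where "p \<in> A1 k" "xs = hh k p" by blast
    then show "xs \<in> T" using A1_T unfolding T_def S_def by simp
  next
    fix xs assume "xs \<in> T"
    then show "xs \<in> hh k ` A1 k" using T_sub unfolding T_def S_def by simp
  qed
  then have cT: "card T = k * (2 * k - 4)" using card_image[OF hh_inj] card_A1 by simp
  have TU: "T = \<Union> (permutations_of_set ` S)"
  proof (intro equalityI subsetI)
    fix xs assume "xs \<in> T"
    then have "set xs \<in> S" "xs \<in> permutations_of_set (set xs)" unfolding T_def permutations_of_set_def by auto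
    then show "xs \<in> \<Union> (permutations_of_set ` S)" by blast
  next
    fix xs assume "xs \<in> \<Union> (permutations_of_set ` S)"
    then obtain s where "s \<in> S" "xs \<in> permutations_of_set s" by blast
    then show "xs \<in> T" unfolding T_def permutations_of_set_def by simp
  qed
  have c3: "card s = 3" if sS: "s \<in> S" for s
  proof -
    obtain a b d where "s = {col k a b, col k b d, col k a d}" "card {col k a b, col k b d, col k a d} = 3"
      using sS unfolding S_def multicoloured_colour_sets_def by blast
    then show ?thesis by simp
  qed
  have "card T = (\<Sum>s\<in>S. card (permutations_of_set s))"
    unfolding TU
  proof (rule card_UN_disjoint)
    show "finite S" unfolding S_def by (rule finite_S)
    show "\<forall>i\<in>S. finite (permutations_of_set i)" by simp
    show "\<forall>i\<in>S. \<forall>j\<in>S. i \<noteq> j \<longrightarrow> permutations_of_set i \<inter> permutations_of_set j = {}"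
      unfolding permutations_of_set_def by auto
  qed
  also have "\<dots> = (\<Sum>s\<in>S. 6)"
  proof (rule sum.cong)
    fix s assume "s \<in> S"
    then have "card s = 3" "finite s" using c3 by (auto intro: card_ge_0_finite)
    then show "card (permutations_of_set s) = 6" by (simp add: fact_numeral)
  qed simp
  also have "\<dots> = 6 * card S" by simp
  finally show ?thesis using cT unfolding S_def by simp
qed

end

theorem proposition3:
  fixes k :: nat
  assumes "k \<ge> 2" and "prime (2 * k + 1)"
  shows "\<exists>c. connected_colouring (2 * k + 1) k c \<and>
           real (card (multicoloured_colour_sets (2 * k + 1) c)) = real k * (real k - 2) / 3"
proof (intro exI conjI)
  show "connected_colouring (2 * k + 1) k (col k)" using connected assms by blast
  have e: "6 * card (multicoloured_colour_sets (2 * k + 1) (col k)) = k * (2 * k - 4)"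
    using card_S assms by blast
  have "real (6 * card (multicoloured_colour_sets (2 * k + 1) (col k))) = real k * (2 * real k - 4)"
    unfolding e using assms(1) by (simp add: of_nat_diff)
  then have h: "6 * real (card (multicoloured_colour_sets (2 * k + 1) (col k))) = real k * (2 * real k - 4)"
    by simp
  have h2: "real k * (2 * real k - 4) = 2 * (real k * (real k - 2))" by (simp add: algebra_simps)
  show "real (card (multicoloured_colour_sets (2 * k + 1) (col k))) = real k * (real k - 2) / 3"
    using h h2 by linarith
qed

end
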